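(* If the Markov chain $\mathcal{M}$ is started from a connected configuration of particles, then every configuration reached during its execution is connected.
   Context: Let $\Gamma$ be the triangular lattice; a configuration is a finite set of occupied vertices ("locations") of $\Gamma$, each occupied by one particle; it is connected if the subgraph induced by occupied locations is connected. For a location $\ell$, $N(\ell)$ is the set of particles at locations adjacent to $\ell$. For adjacent $\ell,\ell'$, let $\mathbb{S}=N(\ell)\cap N(\ell')$ and $N(\ell\cup\ell')=(N(\ell)\cup N(\ell'))$ minus particles located at $\ell$ or $\ell'$. Property 1: $|\mathbb{S}|\in\{1,2\}$ and every particle in $N(\ell\cup\ell')$ is connected to a particle of $\mathbb{S}$ by a lattice path all of whose vertices are particles of $N(\ell\cup\ell')$. Property 2: $|\mathbb{S}|=0$; each of $\ell,\ell'$ has at least one adjacent particle other than one located at the other location; the particles of $N(\ell)$ not at $\ell'$ are connected by paths within this set; the particles of $N(\ell')$ not at $\ell$ are connected by paths within this set. One step of $\mathcal{M}$ (bias $\lambda>0$) from $\sigma$: choose a particle $P$ uniformly (location $\ell$), a neighbor $\ell'$ of $\ell$ uniformly among six, and $q$ uniform in $(0,1)$. If $\ell'$ is occupied, do nothing. Otherwise let $t$ (resp. $t'$) be the number of triangular faces incident to $\ell$ (resp. $\ell'$) with all three vertices occupied when $P$ is at $\ell$ (resp. at $\ell'$); move $P$ to $\ell'$ if (1) $\ell$ does not have exactly five occupied neighbors, (2) $\ell,\ell'$ satisfy Property 1 or 2, and (3) $q<\lambda^{t'-t}$; else do nothing. *)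

theory Defs
  imports Complex_Main
begin

text \<open>Triangular lattice: vertices Z x Z (axial coordinates); each vertex (x,y) is adjacent
to the six vertices (x+-1,y), (x,y+-1), (x+1,y-1), (x-1,y+1).\<close>

type_synonym loc = "int \<times> int"

definition dirs :: "loc set" where
  "dirs = {(1,0), (-1,0), (0,1), (0,-1), (1,-1), (-1,1)}"

definition adj :: "loc \<Rightarrow> loc \<Rightarrow> bool" where
  "adj l l' \<longleftrightarrow> (fst l' - fst l, snd l' - snd l) \<in> dirs"

text \<open>A configuration is a finite set of occupied locations (one particle per location).\<close>

definition path_in :: "loc set \<Rightarrow> loc \<Rightarrow> loc \<Rightarrow> bool" where
  "path_in A x y \<longleftrightarrow> x \<in> A \<and> y \<in> A \<and>
     (\<lambda>a b. a \<in> A \<and> b \<in> A \<and> adj a b)\<^sup>*\<^sup>* x y"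

definition connected_conf :: "loc set \<Rightarrow> bool" where
  "connected_conf A \<longleftrightarrow> (\<forall>x\<in>A. \<forall>y\<in>A. path_in A x y)"

definition nbrs :: "loc set \<Rightarrow> loc \<Rightarrow> loc set" where
  "nbrs \<sigma> l = {p \<in> \<sigma>. adj l p}"

definition prop1 :: "loc set \<Rightarrow> loc \<Rightarrow> loc \<Rightarrow> bool" where
  "prop1 \<sigma> l l' \<longleftrightarrow>
     (let S = nbrs \<sigma> l \<inter> nbrs \<sigma> l';
          NU = (nbrs \<sigma> l \<union> nbrs \<sigma> l') - {l, l'}
      in card S \<in> {1, 2} \<and> (\<forall>p\<in>NU. \<exists>s\<in>S. path_in NU p s))"

definition prop2 :: "loc set \<Rightarrow> loc \<Rightarrow> loc \<Rightarrow> bool" where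
  "prop2 \<sigma> l l' \<longleftrightarrow>
     nbrs \<sigma> l \<inter> nbrs \<sigma> l' = {} \<and>
     nbrs \<sigma> l - {l'} \<noteq> {} \<and> nbrs \<sigma> l' - {l} \<noteq> {} \<and>
     connected_conf (nbrs \<sigma> l - {l'}) \<and> connected_conf (nbrs \<sigma> l' - {l})"

definition is_face :: "loc set \<Rightarrow> bool" where
  "is_face F \<longleftrightarrow> (\<exists>a b c. F = {a, b, c} \<and> adj a b \<and> adj b c \<and> adj a c)"

definition tri_count :: "loc set \<Rightarrow> loc \<Rightarrow> nat" where
  "tri_count \<sigma> l = card {F. is_face F \<and> l \<in> F \<and> F \<subseteq> \<sigma>}"

text \<open>One step of M with bias lam from configuration \<sigma>, given the random choices:
  the chosen particle's location l (in \<sigma>), the chosen neighbouring location l', and q in (0,1).\<close>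
definition mstep :: "real \<Rightarrow> loc set \<Rightarrow> loc \<Rightarrow> loc \<Rightarrow> real \<Rightarrow> loc set" where
  "mstep lam \<sigma> l l' q =
     (if l' \<in> \<sigma> then \<sigma>
      else (let \<sigma>' = insert l' (\<sigma> - {l});
                t = tri_count \<sigma> l;
                t' = tri_count \<sigma>' l'
            in if card (nbrs \<sigma> l) \<noteq> 5 \<and> (prop1 \<sigma> l l' \<or> prop2 \<sigma> l l')
                  \<and> q < lam powr (real t' - real t)
               then \<sigma>' else \<sigma>))"

text \<open>Configurations reached during an execution of M started from \<sigma>0
  (over all possible outcomes of the random choices).\<close>
inductive reached :: "real \<Rightarrow> loc set \<Rightarrow> loc set \<Rightarrow> bool" for lam \<sigma>0 where
  start: "reached lam \<sigma>0 \<sigma>0"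
| step: "\<lbrakk>reached lam \<sigma>0 \<sigma>; l \<in> \<sigma>; adj l l'; 0 < q; q < 1\<rbrakk>
          \<Longrightarrow> reached lam \<sigma>0 (mstep lam \<sigma> l l' q)"

end

theory Submission
  imports Defs
begin

lemma adj_sym: "adj a b \<Longrightarrow> adj b a"
  unfolding adj_def dirs_def by auto

lemma adj_irrefl: "\<not> adj a a"
  unfolding adj_def dirs_def by auto

lemma rt_mono:
  assumes "(\<lambda>a b. a \<in> A \<and> b \<in> A \<and> adj a b)\<^sup>*\<^sup>* x y" "A \<subseteq> B"
  shows "(\<lambda>a b. a \<in> B \<and> b \<in> B \<and> adj a b)\<^sup>*\<^sup>* x y"
  using assms(1)
proof (induction rule: rtranclp_induct)
  case base then show ?case by simp
next
  case (step y z) then show ?case using assms(2)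
    by (metis (mono_tags, lifting) rtranclp.rtrancl_into_rtrancl subsetD)
qed

lemma path_in_mono: "path_in A x y \<Longrightarrow> A \<subseteq> B \<Longrightarrow> path_in B x y"
  unfolding path_in_def using rt_mono by blast

lemma path_in_trans: "path_in A x y \<Longrightarrow> path_in A y z \<Longrightarrow> path_in A x z"
  unfolding path_in_def by auto

lemma path_in_edge: "x \<in> A \<Longrightarrow> y \<in> A \<Longrightarrow> adj x y \<Longrightarrow> path_in A x y"
  unfolding path_in_def by auto

lemma path_in_refl: "x \<in> A \<Longrightarrow> path_in A x x"
  unfolding path_in_def by auto

lemma rt_sym:
  assumes "(\<lambda>a b. a \<in> A \<and> b \<in> A \<and> adj a b)\<^sup>*\<^sup>* x y"
  shows "(\<lambda>a b. a \<in> A \<and> b \<in> A \<and> adj a b)\<^sup>*\<^sup>* y x"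
  using assms
proof (induction rule: rtranclp_induct)
  case base then show ?case by simp
next
  case (step y z) then show ?case
    by (metis (mono_tags, lifting) adj_sym converse_rtranclp_into_rtranclp)
qed

lemma path_in_sym: "path_in A x y \<Longrightarrow> path_in A y x"
  unfolding path_in_def using rt_sym by blast

lemma key:
  assumes conn: "connected_conf \<sigma>" and l: "l \<in> \<sigma>" and l': "l' \<notin> \<sigma>"
    and a: "\<exists>a\<in>\<sigma> - {l}. adj l' a"
    and b: "\<And>u v. u \<in> nbrs \<sigma> l \<Longrightarrow> v \<in> nbrs \<sigma> l \<Longrightarrow> path_in (insert l' (\<sigma> - {l})) u v"
  shows "connected_conf (insert l' (\<sigma> - {l}))"
proof -
  define S' where "S' = insert l' (\<sigma> - {l})"
  have AS: "\<sigma> - {l} \<subseteq> S'" unfolding S'_def by auto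
  have main: "path_in S' x y" if x: "x \<in> \<sigma> - {l}" and y: "y \<in> \<sigma> - {l}" for x y
  proof -
    have r: "(\<lambda>a b. a \<in> \<sigma> \<and> b \<in> \<sigma> \<and> adj a b)\<^sup>*\<^sup>* x y"
      using conn x y unfolding connected_conf_def path_in_def by auto
    have "(z \<in> \<sigma> - {l} \<longrightarrow> path_in S' x z) \<and> (z = l \<longrightarrow> (\<exists>u\<in>nbrs \<sigma> l. path_in S' x u))"
      if "(\<lambda>a b. a \<in> \<sigma> \<and> b \<in> \<sigma> \<and> adj a b)\<^sup>*\<^sup>* x z" for z
      using that
    proof (induction rule: rtranclp_induct)
      case base then show ?case using x AS path_in_refl by blast
    next
      case (step z w)
      have zw: "z \<in> \<sigma>" "w \<in> \<sigma>" "adj z w" using step.hyps(2) by auto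
      show ?case
      proof (cases "z = l")
        case True
        then obtain u where u: "u \<in> nbrs \<sigma> l" "path_in S' x u" using step.IH by blast
        have "w \<noteq> l" using True zw adj_irrefl by blast
        moreover have "w \<in> nbrs \<sigma> l" using True zw unfolding nbrs_def by auto
        ultimately show ?thesis using u b path_in_trans unfolding S'_def by blast
      next
        case False
        then have px: "path_in S' x z" using step.IH zw by blast
        show ?thesis
        proof (cases "w = l")
          case True
          then have "z \<in> nbrs \<sigma> l" using zw adj_sym unfolding nbrs_def by auto
          then show ?thesis using px True False by blast
        next
          case False
          have "path_in S' z w" using path_in_edge zw AS False \<open>z \<noteq> l\<close> by blast
          then show ?thesis using px path_in_trans False by blast
        qed
      qed
    qed
    then show ?thesis using r y by blast
  qed
  obtain a0 where a0: "a0 \<in> \<sigma> - {l}" "adj l' a0" using a by blast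
  have l'a: "path_in S' l' a0" using a0 AS by (intro path_in_edge) (auto simp: S'_def)
  have toA: "\<exists>a\<in>\<sigma> - {l}. path_in S' x a" if "x \<in> S'" for x
  proof (cases "x = l'")
    case True then show ?thesis using l'a a0 by blast
  next
    case False then have "x \<in> \<sigma> - {l}" using that S'_def by auto
    then show ?thesis using path_in_refl AS by blast
  qed
  show ?thesis unfolding connected_conf_def S'_def[symmetric]
  proof (intro ballI)
    fix x y assume "x \<in> S'" "y \<in> S'"
    then obtain a1 a2 where "a1 \<in> \<sigma> - {l}" "path_in S' x a1" "a2 \<in> \<sigma> - {l}" "path_in S' y a2"
      using toA by blast
    then show "path_in S' x y" using main path_in_sym path_in_trans by blast
  qed
qed

lemma step_conn:
  assumes conn: "connected_conf \<sigma>" and l: "l \<in> \<sigma>"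
  shows "connected_conf (mstep lam \<sigma> l l' q)"
proof (cases "l' \<in> \<sigma>")
  case True then show ?thesis using conn unfolding mstep_def by simp
next
  case l': False
  have nl: "l \<notin> nbrs \<sigma> l" "l' \<notin> nbrs \<sigma> l" using adj_irrefl l' unfolding nbrs_def by auto
  have nsub: "nbrs \<sigma> l \<subseteq> insert l' (\<sigma> - {l})" using nl unfolding nbrs_def by auto
  show ?thesis
  proof (cases "prop1 \<sigma> l l' \<or> prop2 \<sigma> l l'")
    case False then show ?thesis using conn l' unfolding mstep_def Let_def by auto
  next
    case True
    have c: "connected_conf (insert l' (\<sigma> - {l}))"
      using True
    proof
      assume p: "prop1 \<sigma> l l'"
      define S where "S = nbrs \<sigma> l \<inter> nbrs \<sigma> l'"
      define NU where "NU = (nbrs \<sigma> l \<union> nbrs \<sigma> l') - {l, l'}"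
      have cS: "card S \<in> {1,2}" and pS: "\<forall>p\<in>NU. \<exists>s\<in>S. path_in NU p s"
        using p unfolding prop1_def Let_def S_def NU_def by auto
      have "S \<noteq> {}" using cS by auto
      have Ssub: "S \<subseteq> \<sigma> - {l}" "\<forall>s\<in>S. adj l' s"
        using nl unfolding S_def nbrs_def by (auto intro: adj_sym)
      have NUsub: "NU \<subseteq> insert l' (\<sigma> - {l})" unfolding NU_def nbrs_def by auto
      have toL: "path_in (insert l' (\<sigma> - {l})) u l'" if "u \<in> nbrs \<sigma> l" for u
      proof -
        have "u \<in> NU" using that nl unfolding NU_def by auto
        then obtain s where s: "s \<in> S" "path_in NU u s" using pS by blast
        have "path_in (insert l' (\<sigma> - {l})) u s" using s NUsub path_in_mono by blast
        moreover have "path_in (insert l' (\<sigma> - {l})) s l'"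
          using s Ssub by (intro path_in_edge) (auto intro: adj_sym)
        ultimately show ?thesis using path_in_trans by blast
      qed
      show ?thesis
        apply (rule key[OF conn l l'])
        using \<open>S \<noteq> {}\<close> Ssub apply blast
        using toL path_in_sym path_in_trans by blast
    next
      assume p: "prop2 \<sigma> l l'"
      have e: "nbrs \<sigma> l' - {l} \<noteq> {}" and cc: "connected_conf (nbrs \<sigma> l - {l'})"
        using p unfolding prop2_def by auto
      have eq: "nbrs \<sigma> l - {l'} = nbrs \<sigma> l" using nl by auto
      show ?thesis
      proof (rule key[OF conn l l'])
        show "\<exists>a\<in>\<sigma> - {l}. adj l' a" using e unfolding nbrs_def by auto
      next
        fix u v assume "u \<in> nbrs \<sigma> l" "v \<in> nbrs \<sigma> l"
        then have "path_in (nbrs \<sigma> l) u v" using cc eq unfolding connected_conf_def by auto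
        then show "path_in (insert l' (\<sigma> - {l})) u v" using nsub path_in_mono by blast
      qed
    qed
    then show ?thesis using conn unfolding mstep_def Let_def by auto
  qed
qed

theorem lemma4:
  fixes lam :: real and \<sigma>0 \<sigma> :: "loc set"
  assumes "0 < lam"
    and "finite \<sigma>0"
    and "connected_conf \<sigma>0"
    and "reached lam \<sigma>0 \<sigma>"
  shows "connected_conf \<sigma>"
  using assms(4)
proof (induction rule: reached.induct)
  case start then show ?case using assms(3) .
next
  case (step \<sigma> l l' q) then show ?case using step_conn by blast
qed

end
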